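(* Let $A$ be a generalized ring and let $\mathfrak a$ be an h-ideal of $A$ with $\mathfrak a=\sqrt{\mathfrak a}$, where $\sqrt{\mathfrak a}=\{a\in A_{[1]}:a^n\in\mathfrak a\text{ for some }n>0\}$. Then $V(\mathfrak a)$ is an irreducible subset of $spec(A)$ (with the Zariski topology) if and only if $\mathfrak a$ is prime.
   Context: All sets $X,Y,Z,W$ below are finite. A partial map $f:X\rightharpoonup Y$ is a map $f:D(f)\to Y$ defined on a subset $D(f)\subseteq X$; $Set_\bullet(X,Y)$ is the set of partial maps. $\mathbb F_\bullet$ is the category of finite sets with partial bijections; $f^t$ is the inverse. $[1]=\{1\}$, $c_X:X\to[1]$ the total map. A generalized ring $A$ consists of: a functor $X\mapsto A_X$ from $\mathbb F_\bullet$ to pointed sets with $A_\emptyset=\{0\}$; $A_f=\prod_{y\in Y}A_{f^{-1}(y)}$ for $f\in Set_\bullet(X,Y)$ (so $A_{c_X}=A_X$, $A_{id_X}=(A_{[1]})^X$); multiplications $\circ:A_Y\times A_f\to A_X$ and contractions $(\,,\,):A_X\times A_f\to A_Y$, zero when an argument is zero, extended fibrewise for $g\in Set_\bullet(Y,Z)$ to $\circ:A_g\times A_f\to A_{g\circ f}$, $(\,,\,):A_{g\circ f}\times A_f\to A_g$ via $(a\circ b)^{(z)}=a^{(z)}\circ b|_z$, $(c,b)^{(z)}=(c^{(z)},b|_z)$ ($b|_z=(b^{(y)})_{y\in g^{-1}(z)}$ for the restriction $f|_z:(g\circ f)^{-1}(z)\rightharpoonup g^{-1}(z)$); and a unit $1\in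 A_{[1]}$ (with transports $1_x$, and $1_f\in A_f$ for partial bijections $f$ with components $1_{f^t(y)}$ on the image, $0$ elsewhere); satisfying for $W\xleftarrow{h}Z\xleftarrow{g}Y\xleftarrow{f}X$: $d\circ(c\circ b)=(d\circ c)\circ b$; $(d,a\circ c)=((d,c),a)$ ($d\in A_{h\circ g\circ f},a\in A_g,c\in A_f$); $(d\circ c,a)=(d,(a,c))$ ($d\in A_{h\circ g},a\in A_{g\circ f},c\in A_f$); $(d\circ a,c)=d\circ(a,c)$ ($d\in A_h,a\in A_{g\circ f},c\in A_f$); for $Z\xrightarrow{g}Y\xleftarrow{f}X$, $h\in Set_\bullet(Y,W)$, $P=\{(z,x)\in D(g)\times D(f):g(z)=f(x)\}$ with projections $\tilde f,\tilde g$, $\tilde c^{(z)}=c^{(g(z))}$, $\tilde a^{(x)}=a^{(f(x))}$: $(d,c)\circ a=(d\circ\tilde a,\tilde c)$ ($d\in A_{h\circ f},a\in A_g,c\in A_f$); $a\circ1_{id_X}=1_{id_Y}\circ a=(a,1_{id_X})=a$ ($a\in A_f$); $a\circ1_{f^t}=(a,1_f)=f_A(a)$ ($a\in A_X$, $f$ a partial bijection). $A_{[1]}$ is a commutative monoid under $\circ$, powers $a^n$. An h-ideal is a subset $\mathfrak a\subseteq A_{[1]}$ with $(b\circ c,d)\in\mathfrak a$ for all finite $X$, $b,d\in A_X$, $c\in\mathfrak a^X\subseteq(A_{[1]})^X$; proper if $1\notin\mathfrak a$. A prime is a proper h-ideal $\mathfrak p$ with $a\circ b\in\mathfrak p\Rightarrow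 a\in\mathfrak p$ or $b\in\mathfrak p$; $spec(A)$ is the set of primes. $V(\mathfrak a)=\{\mathfrak p\in spec(A):\mathfrak p\supseteq\mathfrak a\}$; the Zariski topology has closed sets the $V(\mathfrak a)$, $\mathfrak a\subseteq A_{[1]}$. *)

theory Defs
  imports Main "HOL-Library.Nat_Bijection"
begin

text \<open>Finite sets are modelled as finite subsets of nat; a partial map X -> Y is
  a map f :: nat => nat option with dom f inside X and ran f inside Y.
  Elements of all the A_X live in a common type 'a.\<close>

record 'a gring =
  car :: "nat set \<Rightarrow> 'a set"
  zer :: "nat set \<Rightarrow> 'a"
  trn :: "nat set \<Rightarrow> nat set \<Rightarrow> (nat \<Rightarrow> nat option) \<Rightarrow> 'a \<Rightarrow> 'a"
  mul :: "nat set \<Rightarrow> nat set \<Rightarrow> (nat \<Rightarrow> nat option) \<Rightarrow> 'a \<Rightarrow> (nat \<Rightarrow> 'a) \<Rightarrow> 'a"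
  con :: "nat set \<Rightarrow> nat set \<Rightarrow> (nat \<Rightarrow> nat option) \<Rightarrow> 'a \<Rightarrow> (nat \<Rightarrow> 'a) \<Rightarrow> 'a"
  uni :: 'a

definition pmap :: "nat set \<Rightarrow> nat set \<Rightarrow> (nat \<Rightarrow> nat option) \<Rightarrow> bool" where
  "pmap X Y f \<longleftrightarrow> dom f \<subseteq> X \<and> ran f \<subseteq> Y"

definition pbij :: "nat set \<Rightarrow> nat set \<Rightarrow> (nat \<Rightarrow> nat option) \<Rightarrow> bool" where
  "pbij X Y f \<longleftrightarrow> pmap X Y f \<and> inj_on f (dom f)"

definition ptrans :: "(nat \<Rightarrow> nat option) \<Rightarrow> nat \<Rightarrow> nat option" where
  "ptrans f = (\<lambda>y. if \<exists>x. f x = Some y then Some (THE x. f x = Some y) else None)"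

definition idm :: "nat set \<Rightarrow> nat \<Rightarrow> nat option" where
  "idm X = (\<lambda>x. if x \<in> X then Some x else None)"

definition cmap :: "nat set \<Rightarrow> nat \<Rightarrow> nat option" where
  "cmap X = (\<lambda>x. if x \<in> X then Some (1::nat) else None)"

definition fib :: "nat set \<Rightarrow> (nat \<Rightarrow> nat option) \<Rightarrow> nat \<Rightarrow> nat set" where
  "fib X f y = {x \<in> X. f x = Some y}"

text \<open>A_f = prod_{y in Y} A_{f^{-1}(y)}, as extensional families.\<close>
definition fam :: "('a,'b) gring_scheme \<Rightarrow> nat set \<Rightarrow> nat set \<Rightarrow> (nat \<Rightarrow> nat option) \<Rightarrow> (nat \<Rightarrow> 'a) set" where
  "fam A X Y f = {b. (\<forall>y\<in>Y. b y \<in> car A (fib X f y)) \<and> (\<forall>y. y \<notin> Y \<longrightarrow> b y = undefined)}"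

definition zfam :: "('a,'b) gring_scheme \<Rightarrow> nat set \<Rightarrow> nat set \<Rightarrow> (nat \<Rightarrow> nat option) \<Rightarrow> nat \<Rightarrow> 'a" where
  "zfam A X Y f = (\<lambda>y. if y \<in> Y then zer A (fib X f y) else undefined)"

text \<open>identification A_X = A_{c_X} (family indexed by [1] = {1})\<close>
definition wrap :: "'a \<Rightarrow> nat \<Rightarrow> 'a" where
  "wrap a = (\<lambda>y. if y = (1::nat) then a else undefined)"

definition rfam :: "(nat \<Rightarrow> 'a) \<Rightarrow> nat set \<Rightarrow> nat \<Rightarrow> 'a" where
  "rfam b S = (\<lambda>y. if y \<in> S then b y else undefined)"

text \<open>fibrewise extensions: for a in A_g (g : Y -> Z), b in A_f (f : X -> Y)\<close>
definition mulF :: "('a,'b) gring_scheme \<Rightarrow> nat set \<Rightarrow> nat set \<Rightarrow> nat set \<Rightarrow> (nat \<Rightarrow> nat option)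
    \<Rightarrow> (nat \<Rightarrow> nat option) \<Rightarrow> (nat \<Rightarrow> 'a) \<Rightarrow> (nat \<Rightarrow> 'a) \<Rightarrow> nat \<Rightarrow> 'a" where
  "mulF A X Y Z g f a b = (\<lambda>z. if z \<in> Z then
      mul A (fib X (map_comp g f) z) (fib Y g z) (restrict_map f (fib X (map_comp g f) z))
        (a z) (rfam b (fib Y g z))
    else undefined)"

text \<open>for c in A_{g o f}, b in A_f; result in A_g\<close>
definition conF :: "('a,'b) gring_scheme \<Rightarrow> nat set \<Rightarrow> nat set \<Rightarrow> nat set \<Rightarrow> (nat \<Rightarrow> nat option)
    \<Rightarrow> (nat \<Rightarrow> nat option) \<Rightarrow> (nat \<Rightarrow> 'a) \<Rightarrow> (nat \<Rightarrow> 'a) \<Rightarrow> nat \<Rightarrow> 'a" where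
  "conF A X Y Z g f c b = (\<lambda>z. if z \<in> Z then
      con A (fib X (map_comp g f) z) (fib Y g z) (restrict_map f (fib X (map_comp g f) z))
        (c z) (rfam b (fib Y g z))
    else undefined)"

definition pt :: "nat \<Rightarrow> nat \<Rightarrow> nat option" where
  "pt x = (\<lambda>i. if i = (1::nat) then Some x else None)"

definition one_at :: "('a,'b) gring_scheme \<Rightarrow> nat \<Rightarrow> 'a" where
  "one_at A x = trn A {1} {x} (pt x) (uni A)"

definition one_pb :: "('a,'b) gring_scheme \<Rightarrow> nat set \<Rightarrow> nat set \<Rightarrow> (nat \<Rightarrow> nat option) \<Rightarrow> nat \<Rightarrow> 'a" where
  "one_pb A X Y f = (\<lambda>y. if y \<in> Y then
      (if y \<in> ran f then one_at A (THE x. f x = Some y) else zer A {})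
    else undefined)"

text \<open>identification (A_[1])^X = A_{id_X} via the transports [1] -> {x}\<close>
definition scal_fam :: "('a,'b) gring_scheme \<Rightarrow> nat set \<Rightarrow> (nat \<Rightarrow> 'a) \<Rightarrow> nat \<Rightarrow> 'a" where
  "scal_fam A X c = (\<lambda>x. if x \<in> X then trn A {1} {x} (pt x) (c x) else undefined)"

text \<open>pullback P of Z -g-> Y <-f- X, encoded in nat via prod_encode;
  pbF : P -> Z is the pullback of f, pbG : P -> X the pullback of g\<close>
definition pbP :: "nat set \<Rightarrow> nat set \<Rightarrow> (nat \<Rightarrow> nat option) \<Rightarrow> (nat \<Rightarrow> nat option) \<Rightarrow> nat set" where
  "pbP X Z f g = {prod_encode (z, x) | z x. z \<in> Z \<and> x \<in> X \<and> g z \<noteq> None \<and> g z = f x}"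

definition pbF :: "nat set \<Rightarrow> nat \<Rightarrow> nat option" where
  "pbF P = (\<lambda>p. if p \<in> P then Some (fst (prod_decode p)) else None)"

definition pbG :: "nat set \<Rightarrow> nat \<Rightarrow> nat option" where
  "pbG P = (\<lambda>p. if p \<in> P then Some (snd (prod_decode p)) else None)"

text \<open>a~ with a~^(x) = a^(f(x)) (transported along the canonical bijection of fibres)\<close>
definition atil :: "('a,'b) gring_scheme \<Rightarrow> nat set \<Rightarrow> nat set \<Rightarrow> nat set \<Rightarrow> (nat \<Rightarrow> nat option)
    \<Rightarrow> (nat \<Rightarrow> nat option) \<Rightarrow> (nat \<Rightarrow> 'a) \<Rightarrow> nat \<Rightarrow> 'a" where
  "atil A X Z P f g a = (\<lambda>x. if x \<in> X then
      (case f x of None \<Rightarrow> zer A {}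
       | Some y \<Rightarrow> trn A (fib Z g y) (fib P (pbG P) x)
           (\<lambda>z. if z \<in> fib Z g y then Some (prod_encode (z, x)) else None) (a y))
    else undefined)"

text \<open>c~ with c~^(z) = c^(g(z))\<close>
definition ctil :: "('a,'b) gring_scheme \<Rightarrow> nat set \<Rightarrow> nat set \<Rightarrow> nat set \<Rightarrow> (nat \<Rightarrow> nat option)
    \<Rightarrow> (nat \<Rightarrow> nat option) \<Rightarrow> (nat \<Rightarrow> 'a) \<Rightarrow> nat \<Rightarrow> 'a" where
  "ctil A X Z P f g c = (\<lambda>z. if z \<in> Z then
      (case g z of None \<Rightarrow> zer A {}
       | Some y \<Rightarrow> trn A (fib X f y) (fib P (pbF P) z)
           (\<lambda>x. if x \<in> fib X f y then Some (prod_encode (z, x)) else None) (c y))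
    else undefined)"

definition mult1 :: "('a,'b) gring_scheme \<Rightarrow> 'a \<Rightarrow> 'a \<Rightarrow> 'a" where
  "mult1 A a b = mul A {1} {1} (idm {1}) a (wrap b)"

primrec pw :: "('a,'b) gring_scheme \<Rightarrow> 'a \<Rightarrow> nat \<Rightarrow> 'a" where
  "pw A a 0 = uni A"
| "pw A a (Suc n) = mult1 A a (pw A a n)"

definition gring :: "('a,'b) gring_scheme \<Rightarrow> bool" where
  "gring A \<longleftrightarrow>
    \<comment> \<open>functor to pointed sets, A_empty = {0}\<close>
    car A {} = {zer A {}} \<and>
    (\<forall>X. finite X \<longrightarrow> zer A X \<in> car A X) \<and>
    (\<forall>X Y f a. finite X \<and> finite Y \<and> pbij X Y f \<and> a \<in> car A X \<longrightarrow> trn A X Y f a \<in> car A Y) \<and>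
    (\<forall>X Y f. finite X \<and> finite Y \<and> pbij X Y f \<longrightarrow> trn A X Y f (zer A X) = zer A Y) \<and>
    (\<forall>X a. finite X \<and> a \<in> car A X \<longrightarrow> trn A X X (idm X) a = a) \<and>
    (\<forall>X Y Z f g a. finite X \<and> finite Y \<and> finite Z \<and> pbij X Y f \<and> pbij Y Z g \<and> a \<in> car A X \<longrightarrow>
        trn A X Z (map_comp g f) a = trn A Y Z g (trn A X Y f a)) \<and>
    \<comment> \<open>multiplication and contraction, zero if an argument is zero\<close>
    (\<forall>X Y f a b. finite X \<and> finite Y \<and> pmap X Y f \<and> a \<in> car A Y \<and> b \<in> fam A X Y f \<longrightarrow>
        mul A X Y f a b \<in> car A X) \<and>
    (\<forall>X Y f c b. finite X \<and> finite Y \<and> pmap X Y f \<and> c \<in> car A X \<and> b \<in> fam A X Y f \<longrightarrow>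
        con A X Y f c b \<in> car A Y) \<and>
    (\<forall>X Y f a b. finite X \<and> finite Y \<and> pmap X Y f \<and> a \<in> car A Y \<and> b \<in> fam A X Y f \<longrightarrow>
        mul A X Y f (zer A Y) b = zer A X \<and> mul A X Y f a (zfam A X Y f) = zer A X) \<and>
    (\<forall>X Y f c b. finite X \<and> finite Y \<and> pmap X Y f \<and> c \<in> car A X \<and> b \<in> fam A X Y f \<longrightarrow>
        con A X Y f (zer A X) b = zer A Y \<and> con A X Y f c (zfam A X Y f) = zer A Y) \<and>
    \<comment> \<open>unit\<close>
    uni A \<in> car A {1} \<and>
    \<comment> \<open>axioms for W <-h- Z <-g- Y <-f- X\<close>
    (\<forall>X Y Z W f g h.
       finite X \<and> finite Y \<and> finite Z \<and> finite W \<and> pmap X Y f \<and> pmap Y Z g \<and> pmap Z W h \<longrightarrow>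
       (\<forall>d c b. d \<in> fam A Z W h \<and> c \<in> fam A Y Z g \<and> b \<in> fam A X Y f \<longrightarrow>
          mulF A X Z W h (map_comp g f) d (mulF A X Y Z g f c b)
          = mulF A X Y W (map_comp h g) f (mulF A Y Z W h g d c) b) \<and>
       (\<forall>d a c. d \<in> fam A X W (map_comp h (map_comp g f)) \<and> a \<in> fam A Y Z g \<and> c \<in> fam A X Y f \<longrightarrow>
          conF A X Z W h (map_comp g f) d (mulF A X Y Z g f a c)
          = conF A Y Z W h g (conF A X Y W (map_comp h g) f d c) a) \<and>
       (\<forall>d a c. d \<in> fam A Y W (map_comp h g) \<and> a \<in> fam A X Z (map_comp g f) \<and> c \<in> fam A X Y f \<longrightarrow>
          conF A X Z W h (map_comp g f) (mulF A X Y W (map_comp h g) f d c) a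
          = conF A Y Z W h g d (conF A X Y Z g f a c)) \<and>
       (\<forall>d a c. d \<in> fam A Z W h \<and> a \<in> fam A X Z (map_comp g f) \<and> c \<in> fam A X Y f \<longrightarrow>
          conF A X Y W (map_comp h g) f (mulF A X Z W h (map_comp g f) d a) c
          = mulF A Y Z W h g d (conF A X Y Z g f a c))) \<and>
    \<comment> \<open>pullback axiom for Z -g-> Y <-f- X, h : Y -> W\<close>
    (\<forall>X Y Z W f g h d a c.
       finite X \<and> finite Y \<and> finite Z \<and> finite W \<and> pmap X Y f \<and> pmap Z Y g \<and> pmap Y W h \<and>
       d \<in> fam A X W (map_comp h f) \<and> a \<in> fam A Z Y g \<and> c \<in> fam A X Y f \<longrightarrow>
       (let P = pbP X Z f g in
         mulF A Z Y W h g (conF A X Y W h f d c) a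
         = conF A P Z W (map_comp h g) (pbF P)
             (mulF A P X W (map_comp h f) (pbG P) d (atil A X Z P f g a))
             (ctil A X Z P f g c))) \<and>
    \<comment> \<open>unit axioms\<close>
    (\<forall>X Y f a. finite X \<and> finite Y \<and> pmap X Y f \<and> a \<in> fam A X Y f \<longrightarrow>
       mulF A X X Y f (idm X) a (one_pb A X X (idm X)) = a \<and>
       mulF A X Y Y (idm Y) f (one_pb A Y Y (idm Y)) a = a \<and>
       conF A X X Y f (idm X) a (one_pb A X X (idm X)) = a) \<and>
    (\<forall>X Y f a. finite X \<and> finite Y \<and> pbij X Y f \<and> a \<in> car A X \<longrightarrow>
       mul A Y X (ptrans f) a (one_pb A Y X (ptrans f)) = trn A X Y f a \<and>
       con A X Y f a (one_pb A X Y f) = trn A X Y f a) \<and>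
    \<comment> \<open>A_[1] is a commutative monoid under multiplication\<close>
    (\<forall>a\<in>car A {1}. \<forall>b\<in>car A {1}. mult1 A a b = mult1 A b a) \<and>
    (\<forall>a\<in>car A {1}. \<forall>b\<in>car A {1}. \<forall>c\<in>car A {1}. mult1 A (mult1 A a b) c = mult1 A a (mult1 A b c)) \<and>
    (\<forall>a\<in>car A {1}. mult1 A (uni A) a = a)"

definition h_ideal :: "('a,'b) gring_scheme \<Rightarrow> 'a set \<Rightarrow> bool" where
  "h_ideal A I \<longleftrightarrow> I \<subseteq> car A {1} \<and>
    (\<forall>X b c d. finite X \<and> b \<in> car A X \<and> d \<in> car A X \<and> (\<forall>x\<in>X. c x \<in> I) \<longrightarrow>
       con A X {1} (cmap X) (mul A X X (idm X) b (scal_fam A X c)) (wrap d) \<in> I)"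

definition prime_h :: "('a,'b) gring_scheme \<Rightarrow> 'a set \<Rightarrow> bool" where
  "prime_h A p \<longleftrightarrow> h_ideal A p \<and> uni A \<notin> p \<and>
    (\<forall>a\<in>car A {1}. \<forall>b\<in>car A {1}. mult1 A a b \<in> p \<longrightarrow> a \<in> p \<or> b \<in> p)"

definition spec :: "('a,'b) gring_scheme \<Rightarrow> 'a set set" where
  "spec A = {p. prime_h A p}"

definition Vz :: "('a,'b) gring_scheme \<Rightarrow> 'a set \<Rightarrow> 'a set set" where
  "Vz A I = {p \<in> spec A. I \<subseteq> p}"

definition rad :: "('a,'b) gring_scheme \<Rightarrow> 'a set \<Rightarrow> 'a set" where
  "rad A I = {a \<in> car A {1}. \<exists>n>0. pw A a n \<in> I}"

definition zclosed :: "('a,'b) gring_scheme \<Rightarrow> 'a set set \<Rightarrow> bool" where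
  "zclosed A F \<longleftrightarrow> (\<exists>I. I \<subseteq> car A {1} \<and> F = Vz A I)"

definition zirreducible :: "('a,'b) gring_scheme \<Rightarrow> 'a set set \<Rightarrow> bool" where
  "zirreducible A S \<longleftrightarrow> S \<subseteq> spec A \<and> S \<noteq> {} \<and>
    (\<forall>F1 F2. zclosed A F1 \<and> zclosed A F2 \<and> S \<subseteq> F1 \<union> F2 \<longrightarrow> S \<subseteq> F1 \<or> S \<subseteq> F2)"

end

theory Submission
  imports Defs
begin


lemma gr0: assumes "gring A" shows "car A {} = {zer A {}}"
  using assms unfolding gring_def by (elim conjE) assumption

lemma gr1: assumes "gring A" shows "(\<forall>X. finite X \<longrightarrow> zer A X \<in> car A X)"
  using assms unfolding gring_def by (elim conjE) assumption

lemma gr2: assumes "gring A" shows "(\<forall>X Y f a. finite X \<and> finite Y \<and> pbij X Y f \<and> a \<in> car A X \<longrightarrow> trn A X Y f a \<in> car A Y)"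
  using assms unfolding gring_def by (elim conjE) assumption

lemma gr3: assumes "gring A" shows "(\<forall>X Y f. finite X \<and> finite Y \<and> pbij X Y f \<longrightarrow> trn A X Y f (zer A X) = zer A Y)"
  using assms unfolding gring_def by (elim conjE) assumption

lemma gr4: assumes "gring A" shows "(\<forall>X a. finite X \<and> a \<in> car A X \<longrightarrow> trn A X X (idm X) a = a)"
  using assms unfolding gring_def by (elim conjE) assumption

lemma gr5: assumes "gring A" shows "(\<forall>X Y Z f g a. finite X \<and> finite Y \<and> finite Z \<and> pbij X Y f \<and> pbij Y Z g \<and> a \<in> car A X \<longrightarrow>
        trn A X Z (map_comp g f) a = trn A Y Z g (trn A X Y f a))"
  using assms unfolding gring_def by (elim conjE) assumption

lemma gr6: assumes "gring A" shows "(\<forall>X Y f a b. finite X \<and> finite Y \<and> pmap X Y f \<and> a \<in> car A Y \<and> b \<in> fam A X Y f \<longrightarrow>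
        mul A X Y f a b \<in> car A X)"
  using assms unfolding gring_def by (elim conjE) assumption

lemma gr7: assumes "gring A" shows "(\<forall>X Y f c b. finite X \<and> finite Y \<and> pmap X Y f \<and> c \<in> car A X \<and> b \<in> fam A X Y f \<longrightarrow>
        con A X Y f c b \<in> car A Y)"
  using assms unfolding gring_def by (elim conjE) assumption

lemma gr8: assumes "gring A" shows "(\<forall>X Y f a b. finite X \<and> finite Y \<and> pmap X Y f \<and> a \<in> car A Y \<and> b \<in> fam A X Y f \<longrightarrow>
        mul A X Y f (zer A Y) b = zer A X \<and> mul A X Y f a (zfam A X Y f) = zer A X)"
  using assms unfolding gring_def by (elim conjE) assumption

lemma gr9: assumes "gring A" shows "(\<forall>X Y f c b. finite X \<and> finite Y \<and> pmap X Y f \<and> c \<in> car A X \<and> b \<in> fam A X Y f \<longrightarrow>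
        con A X Y f (zer A X) b = zer A Y \<and> con A X Y f c (zfam A X Y f) = zer A Y)"
  using assms unfolding gring_def by (elim conjE) assumption

lemma gr10: assumes "gring A" shows "uni A \<in> car A {1}"
  using assms unfolding gring_def by (elim conjE) assumption

lemma gr11: assumes "gring A" shows "(\<forall>X Y Z W f g h.
       finite X \<and> finite Y \<and> finite Z \<and> finite W \<and> pmap X Y f \<and> pmap Y Z g \<and> pmap Z W h \<longrightarrow>
       (\<forall>d c b. d \<in> fam A Z W h \<and> c \<in> fam A Y Z g \<and> b \<in> fam A X Y f \<longrightarrow>
          mulF A X Z W h (map_comp g f) d (mulF A X Y Z g f c b)
          = mulF A X Y W (map_comp h g) f (mulF A Y Z W h g d c) b) \<and>
       (\<forall>d a c. d \<in> fam A X W (map_comp h (map_comp g f)) \<and> a \<in> fam A Y Z g \<and> c \<in> fam A X Y f \<longrightarrow>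
          conF A X Z W h (map_comp g f) d (mulF A X Y Z g f a c)
          = conF A Y Z W h g (conF A X Y W (map_comp h g) f d c) a) \<and>
       (\<forall>d a c. d \<in> fam A Y W (map_comp h g) \<and> a \<in> fam A X Z (map_comp g f) \<and> c \<in> fam A X Y f \<longrightarrow>
          conF A X Z W h (map_comp g f) (mulF A X Y W (map_comp h g) f d c) a
          = conF A Y Z W h g d (conF A X Y Z g f a c)) \<and>
       (\<forall>d a c. d \<in> fam A Z W h \<and> a \<in> fam A X Z (map_comp g f) \<and> c \<in> fam A X Y f \<longrightarrow>
          conF A X Y W (map_comp h g) f (mulF A X Z W h (map_comp g f) d a) c
          = mulF A Y Z W h g d (conF A X Y Z g f a c)))"
  using assms unfolding gring_def by (elim conjE) assumption

lemma gr12: assumes "gring A" shows "(\<forall>X Y Z W f g h d a c.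
       finite X \<and> finite Y \<and> finite Z \<and> finite W \<and> pmap X Y f \<and> pmap Z Y g \<and> pmap Y W h \<and>
       d \<in> fam A X W (map_comp h f) \<and> a \<in> fam A Z Y g \<and> c \<in> fam A X Y f \<longrightarrow>
       (let P = pbP X Z f g in
         mulF A Z Y W h g (conF A X Y W h f d c) a
         = conF A P Z W (map_comp h g) (pbF P)
             (mulF A P X W (map_comp h f) (pbG P) d (atil A X Z P f g a))
             (ctil A X Z P f g c)))"
  using assms unfolding gring_def by (elim conjE) assumption

lemma gr13: assumes "gring A" shows "(\<forall>X Y f a. finite X \<and> finite Y \<and> pmap X Y f \<and> a \<in> fam A X Y f \<longrightarrow>
       mulF A X X Y f (idm X) a (one_pb A X X (idm X)) = a \<and>
       mulF A X Y Y (idm Y) f (one_pb A Y Y (idm Y)) a = a \<and>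
       conF A X X Y f (idm X) a (one_pb A X X (idm X)) = a)"
  using assms unfolding gring_def by (elim conjE) assumption

lemma gr14: assumes "gring A" shows "(\<forall>X Y f a. finite X \<and> finite Y \<and> pbij X Y f \<and> a \<in> car A X \<longrightarrow>
       mul A Y X (ptrans f) a (one_pb A Y X (ptrans f)) = trn A X Y f a \<and>
       con A X Y f a (one_pb A X Y f) = trn A X Y f a)"
  using assms unfolding gring_def by (elim conjE) assumption

lemma gr15: assumes "gring A" shows "(\<forall>a\<in>car A {1}. \<forall>b\<in>car A {1}. mult1 A a b = mult1 A b a)"
  using assms unfolding gring_def by (elim conjE) assumption

lemma gr16: assumes "gring A" shows "(\<forall>a\<in>car A {1}. \<forall>b\<in>car A {1}. \<forall>c\<in>car A {1}. mult1 A (mult1 A a b) c = mult1 A a (mult1 A b c))"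
  using assms unfolding gring_def by (elim conjE) assumption

lemma gr17: assumes "gring A" shows "(\<forall>a\<in>car A {1}. mult1 A (uni A) a = a)"
  using assms unfolding gring_def by (elim conjE) assumption


lemma ax_trn_car: "gring A \<Longrightarrow> finite X \<Longrightarrow> finite Y \<Longrightarrow> pbij X Y f \<Longrightarrow> a \<in> car A X \<Longrightarrow> trn A X Y f a \<in> car A Y"
  using gr2 by blast
lemma ax_trn_id: "gring A \<Longrightarrow> finite X \<Longrightarrow> a \<in> car A X \<Longrightarrow> trn A X X (idm X) a = a"
  using gr4 by blast
lemma ax_mul_car: "gring A \<Longrightarrow> finite X \<Longrightarrow> finite Y \<Longrightarrow> pmap X Y f \<Longrightarrow> a \<in> car A Y \<Longrightarrow> b \<in> fam A X Y f \<Longrightarrow> mul A X Y f a b \<in> car A X"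
  using gr6 by blast
lemma ax_con_car: "gring A \<Longrightarrow> finite X \<Longrightarrow> finite Y \<Longrightarrow> pmap X Y f \<Longrightarrow> c \<in> car A X \<Longrightarrow> b \<in> fam A X Y f \<Longrightarrow> con A X Y f c b \<in> car A Y"
  using gr7 by blast
lemma ax_uni: "gring A \<Longrightarrow> uni A \<in> car A {1}"
  using gr10 by blast
lemma ax_assoc: "gring A \<Longrightarrow> finite X \<Longrightarrow> finite Y \<Longrightarrow> finite Z \<Longrightarrow> finite W \<Longrightarrow> pmap X Y f \<Longrightarrow> pmap Y Z g \<Longrightarrow> pmap Z W h \<Longrightarrow>
   d \<in> fam A Z W h \<Longrightarrow> c \<in> fam A Y Z g \<Longrightarrow> b \<in> fam A X Y f \<Longrightarrow>
          mulF A X Z W h (map_comp g f) d (mulF A X Y Z g f c b)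
          = mulF A X Y W (map_comp h g) f (mulF A Y Z W h g d c) b"
proof -
  assume a: "gring A" "finite X" "finite Y" "finite Z" "finite W" "pmap X Y f" "pmap Y Z g" "pmap Z W h"
   "d \<in> fam A Z W h" "c \<in> fam A Y Z g" "b \<in> fam A X Y f"
  from gr11[OF a(1), rule_format, of X Y Z W f g h] a(2-8) have
    "\<forall>d c b. d \<in> fam A Z W h \<and> c \<in> fam A Y Z g \<and> b \<in> fam A X Y f \<longrightarrow>
          mulF A X Z W h (map_comp g f) d (mulF A X Y Z g f c b)
          = mulF A X Y W (map_comp h g) f (mulF A Y Z W h g d c) b" by blast
  thus ?thesis using a(9-11) by blast
qed
lemma ax_pb: "gring A \<Longrightarrow> finite X \<Longrightarrow> finite Y \<Longrightarrow> finite Z \<Longrightarrow> finite W \<Longrightarrow> pmap X Y f \<Longrightarrow> pmap Z Y g \<Longrightarrow> pmap Y W h \<Longrightarrow>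
       d \<in> fam A X W (map_comp h f) \<Longrightarrow> a \<in> fam A Z Y g \<Longrightarrow> c \<in> fam A X Y f \<Longrightarrow> P = pbP X Z f g \<Longrightarrow>
         mulF A Z Y W h g (conF A X Y W h f d c) a
         = conF A P Z W (map_comp h g) (pbF P)
             (mulF A P X W (map_comp h f) (pbG P) d (atil A X Z P f g a))
             (ctil A X Z P f g c)"
proof -
  assume a: "gring A" "finite X" "finite Y" "finite Z" "finite W" "pmap X Y f" "pmap Z Y g" "pmap Y W h"
       "d \<in> fam A X W (map_comp h f)" "a \<in> fam A Z Y g" "c \<in> fam A X Y f" "P = pbP X Z f g"
  show ?thesis using gr12[OF a(1), rule_format, of X Y Z W f g h d a c] a(2-12) unfolding Let_def by blast
qed
lemma ax_unit1: "gring A \<Longrightarrow> finite X \<Longrightarrow> finite Y \<Longrightarrow> pmap X Y f \<Longrightarrow> a \<in> fam A X Y f \<Longrightarrow>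
       mulF A X Y Y (idm Y) f (one_pb A Y Y (idm Y)) a = a"
  using gr13 by blast
lemma ax_unit_trn: "gring A \<Longrightarrow> finite X \<Longrightarrow> finite Y \<Longrightarrow> pbij X Y f \<Longrightarrow> a \<in> car A X \<Longrightarrow>
       mul A Y X (ptrans f) a (one_pb A Y X (ptrans f)) = trn A X Y f a"
  using gr14 by blast
lemma ax_unit_con: "gring A \<Longrightarrow> finite X \<Longrightarrow> finite Y \<Longrightarrow> pbij X Y f \<Longrightarrow> a \<in> car A X \<Longrightarrow>
       con A X Y f a (one_pb A X Y f) = trn A X Y f a"
  using gr14 by blast
lemma ax_comm: "gring A \<Longrightarrow> a \<in> car A {1} \<Longrightarrow> b \<in> car A {1} \<Longrightarrow> mult1 A a b = mult1 A b a"
  using gr15 by blast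
lemma ax_massoc: "gring A \<Longrightarrow> a \<in> car A {1} \<Longrightarrow> b \<in> car A {1} \<Longrightarrow> c \<in> car A {1} \<Longrightarrow> mult1 A (mult1 A a b) c = mult1 A a (mult1 A b c)"
  using gr16 by blast
lemma ax_munit: "gring A \<Longrightarrow> a \<in> car A {1} \<Longrightarrow> mult1 A (uni A) a = a"
  using gr17 by blast




declare One_nat_def[simp del]

lemma pt_eq: "pt i = (\<lambda>q. if q = i' then Some i else None) \<longleftrightarrow> i' = 1"
  unfolding pt_def by (auto simp: fun_eq_iff)

lemma pt1: "pt 1 = idm {1}" unfolding pt_def idm_def by (auto simp: fun_eq_iff)
lemma cmap1: "cmap {1} = idm {1}" unfolding cmap_def idm_def by (auto simp: fun_eq_iff)

lemma dom_idm[simp]: "dom (idm X) = X" unfolding idm_def dom_def by auto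
lemma ran_idm[simp]: "ran (idm X) = X" unfolding idm_def ran_def by auto
lemma pmap_idm[simp]: "pmap X X (idm X)" unfolding pmap_def by simp
lemma pbij_idm[simp]: "pbij X X (idm X)" unfolding pbij_def
  by (rule conjI[OF pmap_idm]) (auto simp: inj_on_def idm_def split: if_splits)
lemma the_idm[simp]: "y \<in> X \<Longrightarrow> (THE x. idm X x = Some y) = y"
  unfolding idm_def by (rule the_equality) (auto split: if_splits)
lemma dom_cmap[simp]: "dom (cmap X) = X" unfolding cmap_def dom_def by auto
lemma pmap_cmap[simp]: "pmap X {1} (cmap X)" unfolding pmap_def cmap_def ran_def by (auto split: if_splits)
lemma fib_cmap[simp]: "fib X (cmap X) 1 = X" unfolding fib_def cmap_def by auto
lemma fib_idm[simp]: "x \<in> X \<Longrightarrow> fib X (idm X) x = {x}" unfolding fib_def idm_def by auto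

lemma wrap_fam: "b \<in> car A X \<Longrightarrow> wrap b \<in> fam A X {1} (cmap X)"
  unfolding fam_def wrap_def by auto
lemma wrap_fam1: "b \<in> car A {1} \<Longrightarrow> wrap b \<in> fam A {1} {1} (idm {1})"
  unfolding fam_def wrap_def by auto

lemma mult1_car: "gring A \<Longrightarrow> a \<in> car A {1} \<Longrightarrow> b \<in> car A {1} \<Longrightarrow> mult1 A a b \<in> car A {1}"
  unfolding mult1_def by (rule ax_mul_car) (auto intro: wrap_fam1)

lemma pw_car: "gring A \<Longrightarrow> a \<in> car A {1} \<Longrightarrow> pw A a n \<in> car A {1}"
  by (induction n) (auto simp: ax_uni mult1_car)

lemma pw_add: "gring A \<Longrightarrow> a \<in> car A {1} \<Longrightarrow> pw A a (m + n) = mult1 A (pw A a m) (pw A a n)"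
  by (induction m) (auto simp: ax_munit pw_car ax_massoc)

lemma one_pb1: "gring A \<Longrightarrow> one_pb A {1} {1} (idm {1}) = wrap (uni A)"
  unfolding one_pb_def wrap_def one_at_def
  by (auto simp: fun_eq_iff pt1 ax_trn_id ax_uni)

lemma scal_fam1: "gring A \<Longrightarrow> z \<in> car A {1} \<Longrightarrow> scal_fam A {1} (\<lambda>_. z) = wrap z"
  unfolding scal_fam_def wrap_def by (auto simp: fun_eq_iff pt1 ax_trn_id)

lemma hI_car: "h_ideal A J \<Longrightarrow> J \<subseteq> car A {1}" unfolding h_ideal_def by blast
lemma hI_cl: "h_ideal A J \<Longrightarrow> finite X \<Longrightarrow> b \<in> car A X \<Longrightarrow> d \<in> car A X \<Longrightarrow> (\<And>x. x \<in> X \<Longrightarrow> c x \<in> J) \<Longrightarrow>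
   con A X {1} (cmap X) (mul A X X (idm X) b (scal_fam A X c)) (wrap d) \<in> J"
  unfolding h_ideal_def by blast

lemma L1: assumes g: "gring A" and J: "h_ideal A J" and z: "z \<in> J" and w: "w \<in> car A {1}"
  shows "mult1 A w z \<in> J"
proof -
  have zc: "z \<in> car A {1}" using hI_car[OF J] z by auto
  have "con A {1} {1} (cmap {1}) (mul A {1} {1} (idm {1}) w (scal_fam A {1} (\<lambda>_. z))) (wrap (uni A)) \<in> J"
    by (rule hI_cl[OF J]) (auto simp: w z ax_uni[OF g])
  also have "con A {1} {1} (cmap {1}) (mul A {1} {1} (idm {1}) w (scal_fam A {1} (\<lambda>_. z))) (wrap (uni A))
     = mult1 A w z"
    using ax_unit_con[OF g, of "{1}" "{1}" "idm {1}" "mult1 A w z"]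
    by (simp add: scal_fam1[OF g zc] cmap1 one_pb1[OF g] mult1_def[symmetric] mult1_car[OF g w zc] ax_trn_id[OF g])
  finally show ?thesis .
qed




definition tot :: "nat set \<Rightarrow> nat set \<Rightarrow> (nat \<Rightarrow> nat option) \<Rightarrow> bool" where
  "tot X Y f \<longleftrightarrow> dom f = X \<and> ran f \<subseteq> Y"

definition sm :: "nat \<Rightarrow> nat \<Rightarrow> nat \<Rightarrow> nat option" where
  "sm p i = (\<lambda>q. if q = p then Some i else None)"

definition ext_on :: "nat set \<Rightarrow> (nat \<Rightarrow> 'a) \<Rightarrow> bool" where
  "ext_on Y b \<longleftrightarrow> (\<forall>y. y \<notin> Y \<longrightarrow> b y = undefined)"

lemma tot_pmap: "tot X Y f \<Longrightarrow> pmap X Y f" unfolding tot_def pmap_def by auto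
lemma fam_ext: "b \<in> fam A X Y f \<Longrightarrow> ext_on Y b" unfolding fam_def ext_on_def by auto
lemma wrap_ext[simp]: "ext_on {1} (wrap b)" unfolding ext_on_def wrap_def by auto

lemma cmap_comp: "tot X Y f \<Longrightarrow> map_comp (cmap Y) f = cmap X"
  unfolding tot_def cmap_def map_comp_def fun_eq_iff ran_def dom_def
  by (auto split: option.splits)

lemma idm_comp: "ran f \<subseteq> Y \<Longrightarrow> map_comp (idm Y) f = f"
  unfolding idm_def map_comp_def fun_eq_iff ran_def
  by (auto split: option.splits)

lemma comp_idm: "dom f \<subseteq> X \<Longrightarrow> map_comp f (idm X) = f"
  unfolding idm_def map_comp_def fun_eq_iff
  by (auto split: option.splits) (metis domIff subsetD)

lemma restrict_tot: "dom f \<subseteq> X \<Longrightarrow> restrict_map f X = f"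
  unfolding restrict_map_def fun_eq_iff by auto (metis domIff subsetD)

lemma rfam_ext: "ext_on Y b \<Longrightarrow> rfam b Y = b"
  unfolding rfam_def ext_on_def fun_eq_iff by auto

lemma tot_cmap: "tot X {1} (cmap X)" unfolding tot_def using pmap_cmap[of X] unfolding pmap_def by auto
lemma tot_idm: "tot X X (idm X)" unfolding tot_def by simp

lemma mulF_wrap: "tot X Y f \<Longrightarrow> ext_on Y b \<Longrightarrow>
   mulF A X Y {1} (cmap Y) f a b = wrap (mul A X Y f (a 1) b)"
  unfolding mulF_def wrap_def
  by (auto simp: fun_eq_iff cmap_comp restrict_tot rfam_ext tot_def)

lemma conF_wrap: "tot X Y f \<Longrightarrow> ext_on Y b \<Longrightarrow>
   conF A X Y {1} (cmap Y) f a b = wrap (con A X Y f (a 1) b)"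
  unfolding conF_def wrap_def
  by (auto simp: fun_eq_iff cmap_comp restrict_tot rfam_ext tot_def)

lemma wrap_1[simp]: "wrap b 1 = b" unfolding wrap_def by simp

lemma wrap_inj[simp]: "wrap a = wrap b \<longleftrightarrow> a = b"
  by (metis wrap_1)

lemma cmap_single: "cmap {p} = sm p 1" unfolding cmap_def sm_def by auto
lemma idm_single: "idm {p} = sm p p" unfolding idm_def sm_def by auto
lemma pt_sm: "pt i = sm 1 i" unfolding pt_def sm_def by auto

lemma dom_sm[simp]: "dom (sm p i) = {p}" unfolding sm_def dom_def by auto
lemma ran_sm[simp]: "ran (sm p i) = {i}" unfolding sm_def ran_def by auto
lemma tot_sm: "tot {p} {i} (sm p i)" unfolding tot_def by simp
lemma pbij_sm: "pbij {p} {i} (sm p i)" unfolding pbij_def pmap_def by (simp add: inj_on_def)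
lemma ptrans_sm: "ptrans (sm p i) = sm i p" unfolding ptrans_def sm_def by (auto simp: fun_eq_iff)
lemma the_sm[simp]: "(THE x. sm p i x = Some i) = p" unfolding sm_def by (rule the_equality) (auto split: if_splits)

lemma one_at_car: "gring A \<Longrightarrow> one_at A p \<in> car A {p}"
  unfolding one_at_def pt_sm by (rule ax_trn_car) (auto simp: pbij_sm ax_uni)

lemma one_pb_sm: "one_pb A {p} {i} (sm p i) = (\<lambda>y. if y = i then one_at A p else undefined)"
  unfolding one_pb_def by (auto simp: fun_eq_iff)

definition wrapi :: "nat \<Rightarrow> 'a \<Rightarrow> nat \<Rightarrow> 'a" where
  "wrapi i w = (\<lambda>y. if y = i then w else undefined)"

lemma wrap_wrapi: "wrap = wrapi 1" unfolding wrap_def wrapi_def by (auto simp: fun_eq_iff)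
lemma wrapi_ext[simp]: "ext_on {i} (wrapi i w)" unfolding ext_on_def wrapi_def by auto
lemma wrapi_fam: "w \<in> car A {p} \<Longrightarrow> wrapi i w \<in> fam A {p} {i} (sm p i)"
  unfolding fam_def wrapi_def fib_def sm_def by auto
lemma wrapi_i[simp]: "wrapi i w i = w" unfolding wrapi_def by simp

lemma mulF_single: "mulF A X {i} {i} (sm i i) f a b = wrapi i (mul A (fib X (map_comp (sm i i) f) i) {i}
   (restrict_map f (fib X (map_comp (sm i i) f) i)) (a i) (rfam b {i}))"
  unfolding mulF_def wrapi_def fib_def sm_def by (auto simp: fun_eq_iff)

lemma U1: assumes g: "gring A" and w: "w \<in> car A {p}"
  shows "mul A {p} {i} (sm p i) (one_at A i) (wrapi i w) = w"
proof -
  have e: "mulF A {p} {i} {i} (idm {i}) (sm p i) (one_pb A {i} {i} (idm {i})) (wrapi i w) = wrapi i w"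
    by (rule ax_unit1[OF g]) (auto simp: tot_pmap[OF tot_sm] wrapi_fam[OF w])
  have c: "map_comp (sm i i) (sm p i) = sm p i" unfolding sm_def map_comp_def by (auto simp: fun_eq_iff)
  have f: "fib {p} (sm p i) i = {p}" unfolding fib_def sm_def by auto
  show ?thesis
    using fun_cong[OF e, of i] c f
    unfolding idm_single mulF_single
    by (simp add: restrict_tot rfam_ext one_pb_sm)
qed


lemma tot_sm_cmap: "tot {p} {i} (sm p i)" by (rule tot_sm)

lemma T1: assumes g: "gring A" and v: "v \<in> car A {1}"
  shows "trn A {1} {p} (pt p) v = mul A {p} {1} (cmap {p}) v (wrap (one_at A p))"
proof -
  have "mul A {p} {1} (ptrans (sm 1 p)) v (one_pb A {p} {1} (ptrans (sm 1 p))) = trn A {1} {p} (sm 1 p) v"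
    by (rule ax_unit_trn[OF g]) (auto simp: pbij_sm v)
  then show ?thesis by (simp add: ptrans_sm pt_sm cmap_single one_pb_sm wrap_def)
qed

lemma trn_pt_car: "gring A \<Longrightarrow> v \<in> car A {1} \<Longrightarrow> trn A {1} {p} (pt p) v \<in> car A {p}"
  unfolding pt_sm by (rule ax_trn_car) (auto simp: pbij_sm)

lemma SL: assumes g: "gring A" and u: "u \<in> car A {1}" and v: "v \<in> car A {1}"
  shows "mul A {p} {i} (sm p i) (trn A {1} {i} (pt i) u) (wrapi i (trn A {1} {p} (pt p) v))
     = trn A {1} {p} (pt p) (mult1 A u v)"
proof -
  define vp where "vp = trn A {1} {p} (pt p) v"
  have vpc: "vp \<in> car A {p}" unfolding vp_def by (rule trn_pt_car[OF g v])
  have f1: "wrap u \<in> fam A {1} {1} (cmap {1})" by (rule wrap_fam[OF u])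
  have f2: "wrap (one_at A i) \<in> fam A {i} {1} (cmap {i})" by (rule wrap_fam[OF one_at_car[OF g]])
  have f3: "wrapi i vp \<in> fam A {p} {i} (sm p i)" by (rule wrapi_fam[OF vpc])
  have ax: "mulF A {p} {1} {1} (cmap {1}) (map_comp (cmap {i}) (sm p i)) (wrap u)
      (mulF A {p} {i} {1} (cmap {i}) (sm p i) (wrap (one_at A i)) (wrapi i vp))
    = mulF A {p} {i} {1} (map_comp (cmap {1}) (cmap {i})) (sm p i)
      (mulF A {i} {1} {1} (cmap {1}) (cmap {i}) (wrap u) (wrap (one_at A i))) (wrapi i vp)"
    by (rule ax_assoc[OF g]) (auto simp: f1 f2 f3 tot_pmap[OF tot_sm] tot_pmap[OF tot_cmap])
  have c1: "map_comp (cmap {i}) (sm p i) = cmap {p}" by (rule cmap_comp[OF tot_sm])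
  have c2: "map_comp (cmap {1}) (cmap {i}) = cmap {i}" by (rule cmap_comp[OF tot_cmap])
  have in1: "mulF A {p} {i} {1} (cmap {i}) (sm p i) (wrap (one_at A i)) (wrapi i vp) = wrap vp"
    by (simp add: mulF_wrap[OF tot_sm] U1[OF g vpc])
  have s1: "mul A {p} {1} (cmap {p}) u (wrap vp) =
      mul A {p} {i} (sm p i) (mul A {i} {1} (cmap {i}) u (wrap (one_at A i))) (wrapi i vp)"
    using ax unfolding c1 c2 in1
    by (simp add: mulF_wrap[OF tot_cmap] mulF_wrap[OF tot_sm] wrap_def[symmetric])
  have f4: "wrap v \<in> fam A {1} {1} (cmap {1})" by (rule wrap_fam[OF v])
  have f5: "wrap (one_at A p) \<in> fam A {p} {1} (cmap {p})" by (rule wrap_fam[OF one_at_car[OF g]])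
  have ax2: "mulF A {p} {1} {1} (cmap {1}) (map_comp (cmap {1}) (cmap {p})) (wrap u)
      (mulF A {p} {1} {1} (cmap {1}) (cmap {p}) (wrap v) (wrap (one_at A p)))
    = mulF A {p} {1} {1} (map_comp (cmap {1}) (cmap {1})) (cmap {p})
      (mulF A {1} {1} {1} (cmap {1}) (cmap {1}) (wrap u) (wrap v)) (wrap (one_at A p))"
    by (rule ax_assoc[OF g]) (auto simp: f1 f4 f5 tot_pmap[OF tot_cmap])
  have c3: "map_comp (cmap {1}) (cmap {p}) = cmap {p}" by (rule cmap_comp[OF tot_cmap])
  have c4: "map_comp (cmap {1}) (cmap {1}) = cmap {1}" by (rule cmap_comp[OF tot_cmap])
  have s2: "mul A {p} {1} (cmap {p}) u (wrap (mul A {p} {1} (cmap {p}) v (wrap (one_at A p))))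
     = mul A {p} {1} (cmap {p}) (mult1 A u v) (wrap (one_at A p))"
    using ax2 unfolding c3 c4
    by (simp add: mulF_wrap[OF tot_cmap] mult1_def cmap1[symmetric])
  show ?thesis
    using s1 s2 T1[OF g u, of i] T1[OF g v, of p] T1[OF g mult1_car[OF g u v], of p]
    unfolding vp_def by simp
qed




definition phi :: "nat \<Rightarrow> nat" where "phi i = prod_encode (1, i)"
definition phim :: "nat set \<Rightarrow> nat \<Rightarrow> nat option" where
  "phim X = (\<lambda>i. if i \<in> X then Some (phi i) else None)"

lemma phi_inj[simp]: "phi i = phi j \<longleftrightarrow> i = j" unfolding phi_def by simp

lemma P_eq: "pbP X {1} (cmap X) (cmap {1}) = phi ` X"
  unfolding pbP_def phi_def cmap_def by auto

lemma pbF_eq: "pbF (phi ` X) = cmap (phi ` X)"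
  unfolding pbF_def cmap_def phi_def by (auto simp: fun_eq_iff)

lemma pbG_eq: "pbG (phi ` X) = ptrans (phim X)"
  unfolding pbG_def ptrans_def phim_def phi_def
  by (auto simp: fun_eq_iff split: if_splits intro!: the_equality[symmetric])

lemma pbG_app: "i \<in> X \<Longrightarrow> pbG (phi ` X) (phi i) = Some i"
  unfolding pbG_def phi_def by auto

lemma dom_pbG[simp]: "dom (pbG P) = P" unfolding pbG_def dom_def by auto
lemma ran_pbG: "ran (pbG (phi ` X)) = X" unfolding pbG_def ran_def phi_def by (auto simp: image_iff) (metis prod_encode_inverse snd_conv)
lemma tot_pbG: "tot (phi ` X) X (pbG (phi ` X))" unfolding tot_def by (simp add: ran_pbG)

lemma dom_phim[simp]: "dom (phim X) = X" unfolding phim_def dom_def by auto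
lemma ran_phim[simp]: "ran (phim X) = phi ` X" unfolding ran_def phim_def by (auto split: if_splits)
lemma pbij_phim: "pbij X (phi ` X) (phim X)"
  unfolding pbij_def pmap_def by (simp add: inj_on_def) (auto simp: phim_def split: if_splits)

lemma fib_pbG: "i \<in> X \<Longrightarrow> fib (phi ` X) (pbG (phi ` X)) i = {phi i}"
  unfolding fib_def pbG_def phi_def by auto

lemma restr_pbG: "i \<in> X \<Longrightarrow> restrict_map (pbG (phi ` X)) {phi i} = sm (phi i) i"
  unfolding restrict_map_def sm_def using pbG_app[of i X] by (auto simp: fun_eq_iff)

definition atl :: "('a,'b) gring_scheme \<Rightarrow> nat set \<Rightarrow> 'a \<Rightarrow> nat \<Rightarrow> 'a" where
  "atl A X x = (\<lambda>i. if i \<in> X then trn A {1} {phi i} (pt (phi i)) x else undefined)"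

lemma atil_eq: "atil A X {1} (phi ` X) (cmap X) (cmap {1}) (wrap x) = atl A X x"
proof -
  have "(\<lambda>z. if z \<in> fib {1} (cmap {1}) 1 then Some (prod_encode (z, i)) else None) = pt (phi i)" for i
    unfolding pt_def phi_def fib_def cmap_def by (auto simp: fun_eq_iff)
  moreover have "fib {1} (cmap {1}) 1 = {1}" by simp
  ultimately show ?thesis
    unfolding atil_def atl_def by (auto simp: fun_eq_iff fib_pbG cmap_def)
qed

lemma ctil_eq: "ctil A X {1} (phi ` X) (cmap X) (cmap {1}) (wrap d) = wrap (trn A X (phi ` X) (phim X) d)"
proof -
  have "(\<lambda>x. if x \<in> fib X (cmap X) 1 then Some (prod_encode (1, x)) else None) = phim X"
    unfolding phim_def phi_def by (auto simp: fun_eq_iff)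
  moreover have "fib (phi ` X) (pbF (phi ` X)) 1 = phi ` X" by (simp add: pbF_eq)
  ultimately show ?thesis
    unfolding ctil_def wrap_def by (auto simp: fun_eq_iff cmap_def[of "{1}"])
qed

lemma atl_fam: "gring A \<Longrightarrow> x \<in> car A {1} \<Longrightarrow> atl A X x \<in> fam A (phi ` X) X (pbG (phi ` X))"
  unfolding fam_def atl_def by (auto simp: fib_pbG trn_pt_car)

lemma atl_ext: "ext_on X (atl A X x)" unfolding ext_on_def atl_def by auto




lemma scal_fam_fam: "gring A \<Longrightarrow> (\<And>i. i \<in> X \<Longrightarrow> c i \<in> car A {1}) \<Longrightarrow> scal_fam A X c \<in> fam A X X (idm X)"
  unfolding fam_def scal_fam_def by (auto simp: trn_pt_car)

lemma mult1_cmap: "mult1 A a b = mul A {1} {1} (cmap {1}) a (wrap b)" unfolding mult1_def cmap1 ..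

lemma snd_phi[simp]: "snd (prod_decode (phi i)) = i" unfolding phi_def by simp

lemma mulF_ext: "ext_on Z (mulF A X Y Z g f a b)" unfolding ext_on_def mulF_def by auto

lemma the_pbG: "i \<in> X \<Longrightarrow> (THE p. pbG (phi ` X) p = Some i) = phi i"
  by (rule the_equality) (auto simp: pbG_app pbG_def phi_def split: if_splits)

lemma one_pb_pbG: "i \<in> X \<Longrightarrow> one_pb A (phi ` X) X (pbG (phi ` X)) i = one_at A (phi i)"
  unfolding one_pb_def using ran_pbG[of X] by (simp add: the_pbG)

lemma one_pb_fam: "gring A \<Longrightarrow> one_pb A (phi ` X) X (pbG (phi ` X)) \<in> fam A (phi ` X) X (pbG (phi ` X))"
  unfolding fam_def by (auto simp: one_pb_pbG fib_pbG one_at_car) (auto simp: one_pb_def)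

lemma colon_main:
  assumes g: "gring A" and fin: "finite X" and b: "b \<in> car A X" and d0: "d0 \<in> car A X"
    and x: "x \<in> car A {1}" and c: "\<And>i. i \<in> X \<Longrightarrow> c i \<in> car A {1}"
  shows "mult1 A (con A X {1} (cmap X) (mul A X X (idm X) b (scal_fam A X c)) (wrap d0)) x
    = con A (phi ` X) {1} (cmap (phi ` X))
        (mul A (phi ` X) (phi ` X) (idm (phi ` X)) (trn A X (phi ` X) (phim X) b)
          (scal_fam A (phi ` X) (\<lambda>p. mult1 A (c (snd (prod_decode p))) x)))
        (wrap (trn A X (phi ` X) (phim X) d0))"
proof -
  define P where "P = phi ` X"
  define s where "s = scal_fam A X c"
  define e where "e = mul A X X (idm X) b s"
  define \<psi> where "\<psi> = pbG P"
  define at where "at = atl A X x"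
  define s' where "s' = scal_fam A P (\<lambda>p. mult1 A (c (snd (prod_decode p))) x)"
  have finP: "finite P" unfolding P_def using fin by simp
  have sf: "s \<in> fam A X X (idm X)" unfolding s_def by (rule scal_fam_fam[OF g c])
  have ec: "e \<in> car A X" unfolding e_def by (rule ax_mul_car[OF g fin fin pmap_idm b sf])
  have tpsi: "tot P X \<psi>" unfolding \<psi>_def P_def by (rule tot_pbG)
  have atf: "at \<in> fam A P X \<psi>" unfolding at_def \<psi>_def P_def by (rule atl_fam[OF g x])
  have s'f: "s' \<in> fam A P P (idm P)" unfolding s'_def
    by (rule scal_fam_fam[OF g]) (auto simp: P_def c x mult1_car[OF g])
  have onef: "one_pb A P X \<psi> \<in> fam A P X \<psi>" unfolding P_def \<psi>_def by (rule one_pb_fam[OF g])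
  have PB: "mult1 A (con A X {1} (cmap X) e (wrap d0)) x
      = con A P {1} (cmap P) (mul A P X \<psi> e at) (wrap (trn A X P (phim X) d0))"
  proof -
    have ax: "mulF A {1} {1} {1} (cmap {1}) (cmap {1}) (conF A X {1} {1} (cmap {1}) (cmap X) (wrap e) (wrap d0)) (wrap x)
         = conF A P {1} {1} (map_comp (cmap {1}) (cmap {1})) (pbF P)
             (mulF A P X {1} (map_comp (cmap {1}) (cmap X)) (pbG P) (wrap e) (atil A X {1} P (cmap X) (cmap {1}) (wrap x)))
             (ctil A X {1} P (cmap X) (cmap {1}) (wrap d0))"
      by (rule ax_pb[OF g fin]) (auto simp: cmap_comp[OF tot_cmap] wrap_fam ec d0 x P_def P_eq)
    show ?thesis using ax
      unfolding cmap_comp[OF tot_cmap] P_def pbF_eq atil_eq ctil_eq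
      by (simp add: conF_wrap[OF tot_cmap] mulF_wrap[OF tot_cmap] mulF_wrap[OF tot_pbG atl_ext]
            mult1_cmap at_def \<psi>_def P_def)
  qed
  have SA: "mul A P X \<psi> e at = mul A P X \<psi> b (mulF A P X X (idm X) \<psi> s at)"
  proof -
    have ax: "mulF A P X {1} (cmap X) (map_comp (idm X) \<psi>) (wrap b) (mulF A P X X (idm X) \<psi> s at)
       = mulF A P X {1} (map_comp (cmap X) (idm X)) \<psi> (mulF A X X {1} (cmap X) (idm X) (wrap b) s) at"
      by (rule ax_assoc[OF g finP fin fin]) (auto simp: tot_pmap[OF tpsi] wrap_fam b sf atf)
    have c1: "map_comp (idm X) \<psi> = \<psi>" using tpsi unfolding tot_def by (simp add: idm_comp)
    show ?thesis using ax unfolding c1 cmap_comp[OF tot_idm]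
      by (simp add: mulF_wrap[OF tpsi] mulF_wrap[OF tot_idm] mulF_ext fam_ext[OF sf] fam_ext[OF atf] e_def)
  qed
  have c1: "map_comp (idm X) \<psi> = \<psi>" using tpsi unfolding tot_def by (simp add: idm_comp)
  have c2: "map_comp \<psi> (idm P) = \<psi>" using tpsi unfolding tot_def by (simp add: comp_idm)
  have SB: "mulF A P X X (idm X) \<psi> s at = mulF A P P X \<psi> (idm P) (one_pb A P X \<psi>) s'"
  proof
    fix i show "mulF A P X X (idm X) \<psi> s at i = mulF A P P X \<psi> (idm P) (one_pb A P X \<psi>) s' i"
    proof (cases "i \<in> X")
      case False then show ?thesis unfolding mulF_def by simp
    next
      case True
      have f1: "fib P \<psi> i = {phi i}" unfolding P_def \<psi>_def using fib_pbG[OF True] .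
      have r1: "restrict_map \<psi> {phi i} = sm (phi i) i" unfolding P_def \<psi>_def using restr_pbG[OF True] .
      have r2: "restrict_map (idm P) {phi i} = sm (phi i) (phi i)"
        unfolding restrict_map_def idm_def sm_def P_def using True by (auto simp: fun_eq_iff)
      have si: "s i = trn A {1} {i} (pt i) (c i)" unfolding s_def scal_fam_def using True by simp
      have ra: "rfam at {i} = wrapi i (trn A {1} {phi i} (pt (phi i)) x)"
        unfolding rfam_def wrapi_def at_def atl_def using True by (auto simp: fun_eq_iff)
      have rs: "rfam s' {phi i} = wrapi (phi i) (trn A {1} {phi i} (pt (phi i)) (mult1 A (c i) x))"
        unfolding rfam_def wrapi_def s'_def scal_fam_def P_def using True by (auto simp: fun_eq_iff)
      have o1: "one_pb A P X \<psi> i = one_at A (phi i)" unfolding P_def \<psi>_def using one_pb_pbG[OF True] .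
      have L: "mulF A P X X (idm X) \<psi> s at i = trn A {1} {phi i} (pt (phi i)) (mult1 A (c i) x)"
        unfolding mulF_def using True c1 f1 r1 si ra SL[OF g c[OF True] x, of "phi i" i] by simp
      have R: "mulF A P P X \<psi> (idm P) (one_pb A P X \<psi>) s' i = trn A {1} {phi i} (pt (phi i)) (mult1 A (c i) x)"
        unfolding mulF_def using True c2 f1 r2 o1 rs U1[OF g trn_pt_car[OF g mult1_car[OF g c[OF True] x]], of "phi i" "phi i"]
        by simp
      show ?thesis using L R by simp
    qed
  qed
  have SC: "mul A P X \<psi> b (mulF A P P X \<psi> (idm P) (one_pb A P X \<psi>) s')
      = mul A P P (idm P) (mul A P X \<psi> b (one_pb A P X \<psi>)) s'"
  proof -
    have ax: "mulF A P X {1} (cmap X) (map_comp \<psi> (idm P)) (wrap b) (mulF A P P X \<psi> (idm P) (one_pb A P X \<psi>) s')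
       = mulF A P P {1} (map_comp (cmap X) \<psi>) (idm P) (mulF A P X {1} (cmap X) \<psi> (wrap b) (one_pb A P X \<psi>)) s'"
      by (rule ax_assoc[OF g finP finP fin]) (auto simp: tot_pmap[OF tpsi] wrap_fam b s'f onef)
    show ?thesis using ax unfolding c2 cmap_comp[OF tpsi]
      by (simp add: mulF_wrap[OF tpsi] mulF_wrap[OF tot_idm] mulF_ext fam_ext[OF s'f] fam_ext[OF onef])
  qed
  have SD: "mul A P X \<psi> b (one_pb A P X \<psi>) = trn A X P (phim X) b"
    using ax_unit_trn[OF g fin finP _ b, of "phim X"] pbij_phim[of X]
    unfolding \<psi>_def P_def pbG_eq by simp
  show ?thesis using PB SA SB SC SD unfolding e_def s_def s'_def P_def by simp
qed




definition colon :: "('a,'b) gring_scheme \<Rightarrow> 'a set \<Rightarrow> 'a \<Rightarrow> 'a set" where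
  "colon A J x = {y \<in> car A {1}. mult1 A x y \<in> J}"

lemma L2: assumes g: "gring A" and J: "h_ideal A J" and x: "x \<in> car A {1}"
  shows "h_ideal A (colon A J x)"
  unfolding h_ideal_def
proof (intro conjI allI impI)
  show "colon A J x \<subseteq> car A {1}" unfolding colon_def by auto
next
  fix X b c d assume a: "finite X \<and> b \<in> car A X \<and> d \<in> car A X \<and> (\<forall>i\<in>X. c i \<in> colon A J x)"
  then have fin: "finite X" and b: "b \<in> car A X" and d: "d \<in> car A X"
    and cc: "\<And>i. i \<in> X \<Longrightarrow> c i \<in> car A {1}" and cJ: "\<And>i. i \<in> X \<Longrightarrow> mult1 A x (c i) \<in> J"
    unfolding colon_def by auto
  define E where "E = con A X {1} (cmap X) (mul A X X (idm X) b (scal_fam A X c)) (wrap d)"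
  have Ec: "E \<in> car A {1}" unfolding E_def
    by (rule ax_con_car[OF g fin]) (auto intro!: ax_mul_car[OF g fin fin] scal_fam_fam[OF g] wrap_fam simp: b d cc)
  have finP: "finite (phi ` X)" using fin by simp
  have "con A (phi ` X) {1} (cmap (phi ` X))
        (mul A (phi ` X) (phi ` X) (idm (phi ` X)) (trn A X (phi ` X) (phim X) b)
          (scal_fam A (phi ` X) (\<lambda>p. mult1 A (c (snd (prod_decode p))) x)))
        (wrap (trn A X (phi ` X) (phim X) d)) \<in> J"
  proof (rule hI_cl[OF J finP])
    show "trn A X (phi ` X) (phim X) b \<in> car A (phi ` X)" by (rule ax_trn_car[OF g fin finP pbij_phim b])
    show "trn A X (phi ` X) (phim X) d \<in> car A (phi ` X)" by (rule ax_trn_car[OF g fin finP pbij_phim d])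
    fix p assume "p \<in> phi ` X"
    then obtain i where i: "i \<in> X" "p = phi i" by auto
    show "mult1 A (c (snd (prod_decode p))) x \<in> J"
      using i cJ[OF i(1)] ax_comm[OF g cc[OF i(1)] x] by simp
  qed
  then have "mult1 A E x \<in> J" unfolding E_def using colon_main[OF g fin b d x cc] by simp
  then have "mult1 A x E \<in> J" using ax_comm[OF g x Ec] by simp
  then show "con A X {1} (cmap X) (mul A X X (idm X) b (scal_fam A X c)) (wrap d) \<in> colon A J x"
    using Ec unfolding colon_def E_def by simp
qed

lemma chain_bound:
  assumes fin: "finite X" and ch: "chain\<^sub>\<subseteq> C" and ne: "C \<noteq> {}" and cx: "\<forall>x\<in>X. c x \<in> \<Union>C"
  shows "\<exists>K\<in>C. \<forall>x\<in>X. c x \<in> K"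
  using fin cx
proof (induction X rule: finite_induct)
  case empty then show ?case using ne by auto
next
  case (insert y F)
  then obtain K where K: "K \<in> C" "\<forall>x\<in>F. c x \<in> K" by auto
  obtain K' where K': "K' \<in> C" "c y \<in> K'" using insert.prems by auto
  show ?case
  proof (cases "K \<subseteq> K'")
    case True then show ?thesis using K K' by blast
  next
    case False then have "K' \<subseteq> K" using ch K K' unfolding chain_subset_def by blast
    then show ?thesis using K K' by blast
  qed
qed

lemma union_hideal:
  assumes ch: "chain\<^sub>\<subseteq> C" and ne: "C \<noteq> {}" and h: "\<forall>K\<in>C. h_ideal A K"
  shows "h_ideal A (\<Union>C)"
  unfolding h_ideal_def
proof (intro conjI allI impI)
  show "\<Union>C \<subseteq> car A {1}" using h hI_car by blast
next
  fix X b c d assume a: "finite X \<and> b \<in> car A X \<and> d \<in> car A X \<and> (\<forall>x\<in>X. c x \<in> \<Union>C)"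
  have "\<exists>K\<in>C. \<forall>x\<in>X. c x \<in> K" using a by (intro chain_bound[OF _ ch ne]) auto
  then obtain K where K: "K \<in> C" "\<forall>x\<in>X. c x \<in> K" by blast
  have "con A X {1} (cmap X) (mul A X X (idm X) b (scal_fam A X c)) (wrap d) \<in> K"
    using hI_cl[of A K X b d c] a K h by blast
  then show "con A X {1} (cmap X) (mul A X X (idm X) b (scal_fam A X c)) (wrap d) \<in> \<Union>C" using K by blast
qed

lemma colon_sup: "gring A \<Longrightarrow> h_ideal A J \<Longrightarrow> x \<in> car A {1} \<Longrightarrow> J \<subseteq> colon A J x"
proof
  fix y assume g: "gring A" and h: "h_ideal A J" and x: "x \<in> car A {1}" and y: "y \<in> J"
  show "y \<in> colon A J x" unfolding colon_def using hI_car[OF h] y L1[OF g h y x] by auto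
qed

lemma krull:
  assumes g: "gring A" and I: "h_ideal A I" and a: "a \<in> car A {1}" and na: "\<forall>n>0. pw A a n \<notin> I"
  shows "\<exists>p. prime_h A p \<and> I \<subseteq> p \<and> a \<notin> p"
proof -
  define F where "F = {K. h_ideal A K \<and> I \<subseteq> K \<and> (\<forall>n>0. pw A a n \<notin> K)}"
  have "\<forall>C\<in>chains F. \<exists>U\<in>F. \<forall>X\<in>C. X \<subseteq> U"
  proof
    fix C assume C: "C \<in> chains F"
    show "\<exists>U\<in>F. \<forall>X\<in>C. X \<subseteq> U"
    proof (cases "C = {}")
      case True then show ?thesis using I na unfolding F_def by auto
    next
      case False
      have ch: "chain\<^sub>\<subseteq> C" and sub: "C \<subseteq> F" using C unfolding chains_def by auto
      have h1: "h_ideal A (\<Union>C)" using union_hideal[OF ch False] sub unfolding F_def by blast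
      have h2: "I \<subseteq> \<Union>C" using sub False unfolding F_def by blast
      have h3: "\<forall>n>0. pw A a n \<notin> \<Union>C" using sub unfolding F_def by blast
      have "\<Union>C \<in> F" unfolding F_def using h1 h2 h3 by simp
      then show ?thesis by blast
    qed
  qed
  from Zorn_Lemma2[OF this] obtain p where pF: "p \<in> F" and pmax: "\<forall>X\<in>F. p \<subseteq> X \<longrightarrow> X = p" by blast
  have hp: "h_ideal A p" and Ip: "I \<subseteq> p" and np: "\<forall>n>0. pw A a n \<notin> p" using pF unfolding F_def by auto
  have pc: "p \<subseteq> car A {1}" using hI_car[OF hp] .
  have pw1: "pw A a 1 = a" using ax_comm[OF g a ax_uni[OF g]] ax_munit[OF g a] by (simp add: One_nat_def)
  have ap: "a \<notin> p" using np[rule_format, of 1] pw1 by simp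
  have up: "uni A \<notin> p"
  proof
    assume "uni A \<in> p"
    then have "mult1 A a (uni A) \<in> p" using L1[OF g hp _ a] by blast
    then show False using np[rule_format, of 1] by (simp add: One_nat_def)
  qed
  have "\<forall>u\<in>car A {1}. \<forall>v\<in>car A {1}. mult1 A u v \<in> p \<longrightarrow> u \<in> p \<or> v \<in> p"
  proof (intro ballI impI)
    fix u v assume u: "u \<in> car A {1}" and v: "v \<in> car A {1}" and uv: "mult1 A u v \<in> p"
    show "u \<in> p \<or> v \<in> p"
    proof (rule ccontr)
      assume "\<not> (u \<in> p \<or> v \<in> p)"
      then have nu: "u \<notin> p" and nv: "v \<notin> p" by auto
      have hK: "h_ideal A (colon A p u)" using L2[OF g hp u] .
      have pK: "p \<subseteq> colon A p u" using colon_sup[OF g hp u] .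
      have vK: "v \<in> colon A p u" using v uv unfolding colon_def by auto
      have "colon A p u \<notin> F"
      proof
        assume "colon A p u \<in> F"
        then have "colon A p u = p" using pmax pK by blast
        then show False using vK nv by simp
      qed
      then have "\<exists>n>0. pw A a n \<in> colon A p u" using hK pK Ip unfolding F_def by auto
      then obtain n where n: "n > 0" "pw A a n \<in> colon A p u" by blast
      have an: "pw A a n \<in> car A {1}" using pw_car[OF g a] .
      have hK2: "h_ideal A (colon A p (pw A a n))" using L2[OF g hp an] .
      have pK2: "p \<subseteq> colon A p (pw A a n)" using colon_sup[OF g hp an] .
      have "\<forall>k>0. pw A a k \<notin> colon A p (pw A a n)"
      proof (intro allI impI)
        fix k :: nat assume "k > 0"
        then have "pw A a (n + k) \<notin> p" using np by simp
        then show "pw A a k \<notin> colon A p (pw A a n)" unfolding colon_def using pw_add[OF g a] by simp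
      qed
      then have "colon A p (pw A a n) \<in> F" using hK2 pK2 Ip unfolding F_def by auto
      then have eq: "colon A p (pw A a n) = p" using pmax pK2 by blast
      have "mult1 A u (pw A a n) \<in> p" using n(2) unfolding colon_def by auto
      then have "u \<in> colon A p (pw A a n)" unfolding colon_def using u an ax_comm[OF g u an] by auto
      then show False using eq nu by simp
    qed
  qed
  then have "prime_h A p" unfolding prime_h_def using hp up by blast
  then show ?thesis using Ip ap by blast
qed

lemma Vz_sub: "Vz A I \<subseteq> spec A" unfolding Vz_def by auto

theorem lemma4p3p6:
  fixes A :: "('a,'b) gring_scheme" and I :: "'a set"
  assumes "gring A" and "h_ideal A I" and "rad A I = I"
  shows "zirreducible A (Vz A I) \<longleftrightarrow> prime_h A I"
proof
  assume p: "prime_h A I"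
  have IV: "I \<in> Vz A I" using p unfolding Vz_def spec_def by auto
  show "zirreducible A (Vz A I)" unfolding zirreducible_def
  proof (intro conjI allI impI)
    show "Vz A I \<subseteq> spec A" by (rule Vz_sub)
    show "Vz A I \<noteq> {}" using IV by auto
  next
    fix F1 F2 assume a: "zclosed A F1 \<and> zclosed A F2 \<and> Vz A I \<subseteq> F1 \<union> F2"
    then obtain J1 J2 where J: "F1 = Vz A J1" "F2 = Vz A J2" unfolding zclosed_def by auto
    have "I \<in> F1 \<or> I \<in> F2" using a IV by auto
    then have "J1 \<subseteq> I \<or> J2 \<subseteq> I" using J unfolding Vz_def by auto
    then show "Vz A I \<subseteq> F1 \<or> Vz A I \<subseteq> F2" using J unfolding Vz_def by auto
  qed
next
  assume z: "zirreducible A (Vz A I)"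
  have g: "gring A" and hI: "h_ideal A I" using assms by auto
  have Ic: "I \<subseteq> car A {1}" using hI_car[OF hI] .
  have key: "a \<in> I" if a: "a \<in> car A {1}" and V: "Vz A I \<subseteq> Vz A {a}" for a
  proof (rule ccontr)
    assume "a \<notin> I"
    then have "a \<notin> rad A I" using assms(3) by simp
    then have "\<forall>n>0. pw A a n \<notin> I" using a unfolding rad_def by blast
    from krull[OF g hI a this] obtain p where "prime_h A p" "I \<subseteq> p" "a \<notin> p" by blast
    then have "p \<in> Vz A I" unfolding Vz_def spec_def by auto
    then show False using V \<open>a \<notin> p\<close> unfolding Vz_def by auto
  qed
  obtain q where q: "q \<in> Vz A I" using z unfolding zirreducible_def by auto
  have uI: "uni A \<notin> I" using q unfolding Vz_def spec_def prime_h_def by auto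
  have "\<forall>a\<in>car A {1}. \<forall>b\<in>car A {1}. mult1 A a b \<in> I \<longrightarrow> a \<in> I \<or> b \<in> I"
  proof (intro ballI impI)
    fix a b assume a: "a \<in> car A {1}" and b: "b \<in> car A {1}" and ab: "mult1 A a b \<in> I"
    have cl: "zclosed A (Vz A {a})" "zclosed A (Vz A {b})" using a b unfolding zclosed_def by auto
    have "Vz A I \<subseteq> Vz A {a} \<union> Vz A {b}"
    proof
      fix p assume "p \<in> Vz A I"
      then have "prime_h A p" "I \<subseteq> p" unfolding Vz_def spec_def by auto
      then have "a \<in> p \<or> b \<in> p" using ab a b unfolding prime_h_def by blast
      then show "p \<in> Vz A {a} \<union> Vz A {b}" using \<open>p \<in> Vz A I\<close> unfolding Vz_def by auto
    qed
    then have "Vz A I \<subseteq> Vz A {a} \<or> Vz A I \<subseteq> Vz A {b}" using z cl unfolding zirreducible_def by blast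
    then show "a \<in> I \<or> b \<in> I" using key a b by blast
  qed
  then show "prime_h A I" unfolding prime_h_def using hI uI by blast
qed


end
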